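(* Let $D$ be a digraph with at least two vertices and $s\in V(D)$ such that every vertex of $D$ is reachable from $s$, let $(\hat T,\{B_x\}_{x\in V(\hat T)})$ be the $s$-rooted cut decomposition of $D$, and let $\hat P=x_1x_2\dots x_\ell$ be a degenerate path of $\hat T$. Then: (1) every out-branching of $D$ rooted at $s$ contains all arcs $x_ix_{i+1}$, $1\le i<\ell$ (in particular these are arcs of $D$); (2) every arc $x_jx_i$ of $D$ with $j>i$ belongs to no out-branching of $D$ rooted at $s$; (3) for every $1\le i<\ell$, the only arc of $D$ from $x_i$ to a vertex of $B_y$, where $y=x_i$ or $y$ is a descendant of $x_i$ in $\hat T$, is the arc $x_ix_{i+1}$.
   Context: Digraphs are finite and without loops; paths are directed. An out-tree is an oriented tree with exactly one vertex of in-degree zero (its root); an out-branching of $D$ is a spanning out-tree of $D$. A vertex $v$ is bi-reachable from $r$ if there are two internally vertex-disjoint directed paths from $r$ to $v$. For a digraph $H$ with at least two vertices and $r\in V(H)$ such that every vertex of $H$ is reachable from $r$, the diblock $B_r$ of $r$ in $H$ is the set of all vertices bi-reachable from $r$, together with $r$ and all out-neighbours of $r$. For $x\in B_r\setminus\{r\}$ let $X_x$ be the set of vertices $v\in V(H)\setminus B_r$ such that every directed $r$–$v$ path intersects $B_r$ for the last time in $x$; $x$ is a bottleneck of $B_r$ if $X_x\ne\emptyset$ (the sets $X_x$ partition $V(H)\setminus B_r$). The $r$-rooted cut decomposition $(\hat T,\{B_x\}_{x\in V(\hat T)})$ of $H$ is defined recursively: $\hat T$ is a rooted tree with root $r$ and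 $V(\hat T)\subseteq V(H)$; the set associated with the root is $B_r$; the children of $r$ are the bottlenecks of $B_r$; and for each bottleneck $x$, the subtree of $\hat T$ rooted at $x$ together with its associated sets is the $x$-rooted cut decomposition of the induced subgraph $H[X_x\cup\{x\}]$. A set $B_x$ is degenerate if $x$ is an internal (non-leaf) node of $\hat T$ and $|B_x|=2$. A path $x_1\dots x_\ell$ in $\hat T$ is monotone if it is a subpath of a path from the root of $\hat T$ to a leaf, with $x_{i+1}$ a child of $x_i$; it is degenerate if it is monotone and $B_{x_i}$ is degenerate for every $i$. *)

theory Defs
  imports Main
begin

text \<open>A digraph is given by a vertex set V and an arc set A of ordered pairs.
  Subgraphs induced by W are handled by restricting all vertices of paths to W.\<close>

definition digraph :: "'a set \<Rightarrow> ('a \<times> 'a) set \<Rightarrow> bool" where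
  "digraph V A \<longleftrightarrow> finite V \<and> A \<subseteq> V \<times> V \<and> (\<forall>v. (v, v) \<notin> A)"

definition dipath :: "'a set \<Rightarrow> ('a \<times> 'a) set \<Rightarrow> 'a list \<Rightarrow> bool" where
  "dipath W A p \<longleftrightarrow> p \<noteq> [] \<and> distinct p \<and> set p \<subseteq> W \<and>
     (\<forall>i. Suc i < length p \<longrightarrow> (p ! i, p ! Suc i) \<in> A)"

definition bireachable :: "'a set \<Rightarrow> ('a \<times> 'a) set \<Rightarrow> 'a \<Rightarrow> 'a \<Rightarrow> bool" where
  "bireachable W A r v \<longleftrightarrow> (\<exists>p q. dipath W A p \<and> dipath W A q \<and> p \<noteq> q \<and>
     hd p = r \<and> last p = v \<and> hd q = r \<and> last q = v \<and>
     (set p - {r, v}) \<inter> (set q - {r, v}) = {})"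

definition diblock :: "'a set \<Rightarrow> ('a \<times> 'a) set \<Rightarrow> 'a \<Rightarrow> 'a set" where
  "diblock W A r = {r} \<union> {v \<in> W. (r, v) \<in> A} \<union> {v \<in> W. bireachable W A r v}"

definition Xset :: "'a set \<Rightarrow> ('a \<times> 'a) set \<Rightarrow> 'a \<Rightarrow> 'a \<Rightarrow> 'a set" where
  "Xset W A r x = {v \<in> W - diblock W A r. \<forall>p. dipath W A p \<and> hd p = r \<and> last p = v \<longrightarrow>
      (\<exists>k < length p. p ! k = x \<and> (\<forall>j. k < j \<and> j < length p \<longrightarrow> p ! j \<notin> diblock W A r))}"

definition bottlenecks :: "'a set \<Rightarrow> ('a \<times> 'a) set \<Rightarrow> 'a \<Rightarrow> 'a set" where
  "bottlenecks W A r = {x \<in> diblock W A r - {r}. Xset W A r x \<noteq> {}}"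

text \<open>Nodes of the r-rooted cut decomposition of (V,A), each paired with the vertex set
  of the induced subgraph in which it is the root.\<close>
inductive_set cd_nodes :: "'a set \<Rightarrow> ('a \<times> 'a) set \<Rightarrow> 'a \<Rightarrow> ('a set \<times> 'a) set"
  for V A r where
  cd_root: "(V, r) \<in> cd_nodes V A r"
| cd_child: "(W, x) \<in> cd_nodes V A r \<Longrightarrow> y \<in> bottlenecks W A x \<Longrightarrow>
             (Xset W A x y \<union> {y}, y) \<in> cd_nodes V A r"

definition cd_node :: "'a set \<Rightarrow> ('a \<times> 'a) set \<Rightarrow> 'a \<Rightarrow> 'a \<Rightarrow> bool" where
  "cd_node V A r x \<longleftrightarrow> (\<exists>W. (W, x) \<in> cd_nodes V A r)"

definition cd_sub :: "'a set \<Rightarrow> ('a \<times> 'a) set \<Rightarrow> 'a \<Rightarrow> 'a \<Rightarrow> 'a set" where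
  "cd_sub V A r x = (THE W. (W, x) \<in> cd_nodes V A r)"

definition cd_bag :: "'a set \<Rightarrow> ('a \<times> 'a) set \<Rightarrow> 'a \<Rightarrow> 'a \<Rightarrow> 'a set" where
  "cd_bag V A r x = diblock (cd_sub V A r x) A x"

definition cd_children :: "'a set \<Rightarrow> ('a \<times> 'a) set \<Rightarrow> 'a \<Rightarrow> 'a \<Rightarrow> 'a set" where
  "cd_children V A r x = (if cd_node V A r x then bottlenecks (cd_sub V A r x) A x else {})"

definition cd_child_rel :: "'a set \<Rightarrow> ('a \<times> 'a) set \<Rightarrow> 'a \<Rightarrow> ('a \<times> 'a) set" where
  "cd_child_rel V A r = {(x, y). y \<in> cd_children V A r x}"

definition degenerate_node :: "'a set \<Rightarrow> ('a \<times> 'a) set \<Rightarrow> 'a \<Rightarrow> 'a \<Rightarrow> bool" where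
  "degenerate_node V A r x \<longleftrightarrow> cd_node V A r x \<and> cd_children V A r x \<noteq> {} \<and>
     card (cd_bag V A r x) = 2"

definition degenerate_path :: "'a set \<Rightarrow> ('a \<times> 'a) set \<Rightarrow> 'a \<Rightarrow> 'a list \<Rightarrow> bool" where
  "degenerate_path V A r xs \<longleftrightarrow> xs \<noteq> [] \<and>
     (\<forall>i < length xs. degenerate_node V A r (xs ! i)) \<and>
     (\<forall>i. Suc i < length xs \<longrightarrow> xs ! Suc i \<in> cd_children V A r (xs ! i))"

definition out_branching :: "'a set \<Rightarrow> ('a \<times> 'a) set \<Rightarrow> 'a \<Rightarrow> ('a \<times> 'a) set \<Rightarrow> bool" where
  "out_branching V A s F \<longleftrightarrow> F \<subseteq> A \<and> s \<in> V \<and> (\<forall>u. (u, s) \<notin> F) \<and>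
     (\<forall>v \<in> V. v \<noteq> s \<longrightarrow> (\<exists>!u. (u, v) \<in> F)) \<and> (\<forall>v \<in> V. (s, v) \<in> F\<^sup>*)"

end

theory Submission
  imports Defs
begin


definition Rs :: "('a \<times> 'a) set \<Rightarrow> 'a set \<Rightarrow> ('a \<times> 'a) set" where
  "Rs A S = A \<inter> (S \<times> S)"

lemma Rs_mono: "S \<subseteq> T \<Longrightarrow> (a,b) \<in> (Rs A S)\<^sup>* \<Longrightarrow> (a,b) \<in> (Rs A T)\<^sup>*"
  by (rule rtrancl_mono[THEN subsetD, of "Rs A S"]) (auto simp: Rs_def)

lemma Rs_mono2: "A \<subseteq> B \<Longrightarrow> (a,b) \<in> (Rs A S)\<^sup>* \<Longrightarrow> (a,b) \<in> (Rs B S)\<^sup>*"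
  by (rule rtrancl_mono[THEN subsetD, of "Rs A S"]) (auto simp: Rs_def)

lemma Rs_end: "(a,b) \<in> (Rs A S)\<^sup>* \<Longrightarrow> a = b \<or> b \<in> S"
  by (erule rtranclE) (auto simp: Rs_def)

lemma Rs_step: "(a,b) \<in> (Rs A S)\<^sup>* \<Longrightarrow> (b,c) \<in> A \<Longrightarrow> b \<in> S \<Longrightarrow> c \<in> S \<Longrightarrow> (a,c) \<in> (Rs A S)\<^sup>*"
  by (rule rtrancl_into_rtrancl) (auto simp: Rs_def)

lemma dipath_mono: "S \<subseteq> T \<Longrightarrow> dipath S A p \<Longrightarrow> dipath T A p"
  by (auto simp: dipath_def)

lemma path_rt:
  assumes "dipath W A p" "i \<le> j" "j < length p" "\<forall>k. i \<le> k \<and> k \<le> j \<longrightarrow> p!k \<in> T"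
  shows "(p!i, p!j) \<in> (Rs A T)\<^sup>*"
  using assms(2-4)
proof (induction j)
  case 0 then show ?case by simp
next
  case (Suc j)
  show ?case
  proof (cases "i = Suc j")
    case True then show ?thesis by simp
  next
    case False
    then have "i \<le> j" using Suc by simp
    then have "(p!i,p!j) \<in> (Rs A T)\<^sup>*" using Suc by auto
    moreover have "(p!j, p!Suc j) \<in> Rs A T" using Suc.prems assms(1) \<open>i \<le> j\<close>
      by (auto simp: Rs_def dipath_def)
    ultimately show ?thesis by (rule rtrancl_into_rtrancl)
  qed
qed

lemma path_hd_last:
  assumes "dipath W A p" "set p \<subseteq> T"
  shows "(hd p, last p) \<in> (Rs A T)\<^sup>*"
proof -
  have ne: "p \<noteq> []" using assms by (simp add: dipath_def)
  have "(p!0, p!(length p - 1)) \<in> (Rs A T)\<^sup>*"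
  proof (rule path_rt[OF assms(1)])
    show "length p - 1 < length p" using ne by simp
    show "\<forall>k. 0 \<le> k \<and> k \<le> length p - 1 \<longrightarrow> p ! k \<in> T"
    proof (intro allI impI)
      fix k assume "0 \<le> k \<and> k \<le> length p - 1"
      then have "k < length p" using ne by (cases p) auto
      then show "p ! k \<in> T" using assms(2) nth_mem by blast
    qed
  qed simp
  then show ?thesis using ne by (simp add: hd_conv_nth last_conv_nth)
qed

lemma rt_path:
  assumes "(a,b) \<in> (Rs A S)\<^sup>*" "a \<in> S"
  shows "\<exists>p. dipath S A p \<and> hd p = a \<and> last p = b"
  using assms(1)
proof (induction rule: rtrancl_induct)
  case base
  show ?case by (rule exI[of _ "[a]"]) (simp add: dipath_def assms(2))
next
  case (step b c)
  then obtain p where p: "dipath S A p" "hd p = a" "last p = b" by blast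
  have ne: "p \<noteq> []" using p by (simp add: dipath_def)
  show ?case
  proof (cases "c \<in> set p")
    case True
    then obtain k where k: "k < length p" "p!k = c" by (auto simp: in_set_conv_nth)
    let ?q = "take (Suc k) p"
    have "dipath S A ?q"
      using p(1) k unfolding dipath_def
      by (auto dest: in_set_takeD)
    moreover have "hd ?q = a" using p ne by simp
    moreover have "last ?q = c" using k ne by (simp add: last_conv_nth min_def, intro impI, subgoal_tac "k = length p - 1", auto)
    ultimately show ?thesis by blast
  next
    case False
    let ?q = "p @ [c]"
    have "dipath S A ?q"
      unfolding dipath_def
    proof (intro conjI allI impI)
      show "?q \<noteq> []" by simp
      show "distinct ?q" using False p by (simp add: dipath_def)
      show "set ?q \<subseteq> S" using p step by (auto simp: dipath_def Rs_def)
    next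
      fix i assume i: "Suc i < length ?q"
      show "(?q ! i, ?q ! Suc i) \<in> A"
      proof (cases "Suc i < length p")
        case True then show ?thesis using p by (simp add: nth_append dipath_def)
      next
        case False
        then have "i = length p - 1" "Suc i = length p" using i by auto
        then show ?thesis using step p ne by (simp add: nth_append last_conv_nth Rs_def)
      qed
    qed
    then show ?thesis using p ne by auto
  qed
qed



locale G =
  fixes V :: "'a set" and A :: "('a \<times> 'a) set" and s :: 'a
  assumes dg: "digraph V A" and sV: "s \<in> V" and reach: "\<forall>v\<in>V. (s,v) \<in> A\<^sup>*"
begin

lemma AV: "A \<subseteq> V \<times> V" using dg by (simp add: digraph_def)
lemma noloop: "(v,v) \<notin> A" using dg by (simp add: digraph_def)

lemma RsV: "Rs A V = A" using AV by (auto simp: Rs_def)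

lemma reachR: "v \<in> V \<Longrightarrow> (s,v) \<in> (Rs A V)\<^sup>*" using reach RsV by simp

definition av :: "'a \<Rightarrow> 'a \<Rightarrow> bool" where
  "av x v \<longleftrightarrow> s \<noteq> x \<and> (s,v) \<in> (Rs A (V-{x}))\<^sup>*"

definition Dm :: "'a \<Rightarrow> 'a set" where
  "Dm x = {v \<in> V. \<not> av x v}"

lemma Dm_V: "Dm x \<subseteq> V" by (auto simp: Dm_def)

lemma self_Dm: "x \<in> V \<Longrightarrow> x \<in> Dm x"
  using Rs_end[of s x A "V - {x}"] by (auto simp: Dm_def av_def)

lemma s_Dm: "s \<in> Dm x \<Longrightarrow> x = s"
  by (auto simp: Dm_def av_def)

lemma Dm_s: "Dm s = V" by (auto simp: Dm_def av_def)

lemma split_rt: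
  assumes "(a,b) \<in> (Rs A S)\<^sup>*"
  shows "(a,b) \<in> (Rs A (S-{y}))\<^sup>* \<or> (a,y) \<in> (Rs A S)\<^sup>*"
  using assms
proof (induction rule: rtrancl_induct)
  case base then show ?case by simp
next
  case (step b c)
  show ?case
  proof (cases "(a, y) \<in> (Rs A S)\<^sup>*")
    case True then show ?thesis by simp
  next
    case False
    then have ab: "(a,b) \<in> (Rs A (S-{y}))\<^sup>*" using step by blast
    have "b \<noteq> y" using False step(1) by blast
    show ?thesis
    proof (cases "c = y")
      case True then show ?thesis using step(1,2) rtrancl_into_rtrancl[of a b "Rs A S" c] by simp
    next
      case False
      then have "(b,c) \<in> Rs A (S-{y})" using step \<open>b \<noteq> y\<close> by (auto simp: Rs_def)
      then have "(a,c) \<in> (Rs A (S-{y}))\<^sup>*" by (rule rtrancl_into_rtrancl[OF ab])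
      then show ?thesis by simp
    qed
  qed
qed

lemma Dm_trans:
  assumes "y \<in> Dm x" "v \<in> Dm y" shows "v \<in> Dm x"
proof (rule ccontr)
  assume "v \<notin> Dm x"
  then have sx: "s \<noteq> x" and p: "(s,v) \<in> (Rs A (V-{x}))\<^sup>*"
    using assms by (auto simp: Dm_def av_def)
  from split_rt[OF p, of y] show False
  proof
    assume h: "(s, v) \<in> (Rs A (V - {x} - {y}))\<^sup>*"
    show False
    proof (cases "s = y")
      case True then show False using s_Dm assms(1) sx by blast
    next
      case False
      have "(s, v) \<in> (Rs A (V - {y}))\<^sup>*" by (rule Rs_mono[OF _ h]) auto
      then show False using False assms(2) by (auto simp: Dm_def av_def)
    qed
  next
    assume "(s, y) \<in> (Rs A (V - {x}))\<^sup>*"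
    then show False using sx assms(1) by (auto simp: Dm_def av_def)
  qed
qed

lemma prefix_rt:
  assumes "x \<in> V" shows "(s,x) \<in> (Rs A (V - (Dm x - {x})))\<^sup>*"
proof -
  obtain p where p: "dipath V A p" "hd p = s" "last p = x"
    using rt_path[OF reachR[OF assms] sV] by blast
  have ne: "p \<noteq> []" and dist: "distinct p" using p by (auto simp: dipath_def)
  have "set p \<subseteq> V - (Dm x - {x})"
  proof
    fix u assume "u \<in> set p"
    then obtain k where k: "k < length p" "p!k = u" by (auto simp: in_set_conv_nth)
    have uV: "u \<in> V" using p(1) \<open>u \<in> set p\<close> by (auto simp: dipath_def)
    show "u \<in> V - (Dm x - {x})"
    proof (cases "u = x")
      case True then show ?thesis using uV by simp
    next
      case False
      have lx: "last p = p!(length p - 1)" using ne by (simp add: last_conv_nth)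
      have klt: "k < length p - 1" using k False p(3) lx by (cases "k = length p - 1") auto
      have ne_x: "\<forall>i. i \<le> k \<longrightarrow> p!i \<in> V - {x}"
      proof (intro allI impI)
        fix i assume "i \<le> k"
        then have "i < length p" "i \<noteq> length p - 1" using klt by auto
        then have "p!i \<noteq> p!(length p - 1)" using dist ne by (simp add: nth_eq_iff_index_eq)
        then show "p!i \<in> V - {x}" using p(1,3) lx \<open>i < length p\<close> by (auto simp: dipath_def)
      qed
      have "(p!0, p!k) \<in> (Rs A (V-{x}))\<^sup>*"
        by (rule path_rt[OF p(1)]) (use k ne_x in auto)
      moreover have "p!0 = s" using p ne by (simp add: hd_conv_nth)
      moreover have "s \<noteq> x" using ne_x[rule_format, of 0] \<open>p!0 = s\<close> by simp
      ultimately have "av x u" using k by (auto simp: av_def)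
      then show ?thesis using uV by (auto simp: Dm_def)
    qed
  qed
  from path_hd_last[OF p(1) this] show ?thesis using p by simp
qed

lemma Dm_antisym:
  assumes "x \<in> V" "y \<in> Dm x" "x \<in> Dm y" shows "x = y"
proof (rule ccontr)
  assume ne: "x \<noteq> y"
  have "s \<noteq> y" using s_Dm assms(2) ne by blast
  have "(s,x) \<in> (Rs A (V-{y}))\<^sup>*"
    by (rule Rs_mono[OF _ prefix_rt[OF assms(1)]]) (use assms(2) ne in auto)
  then have "av y x" using \<open>s \<noteq> y\<close> by (simp add: av_def)
  then show False using assms(3) by (simp add: Dm_def)
qed

lemma suffix_rt:
  assumes "(s,v) \<in> (Rs A T)\<^sup>*" "T \<subseteq> V" "v \<in> Dm x" "x \<in> V"
  shows "(x,v) \<in> (Rs A (T \<inter> insert x (Dm x)))\<^sup>*"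
  using assms(1,3)
proof (induction rule: rtrancl_induct)
  case base
  then show ?case using s_Dm by auto
next
  case (step b c)
  have bc: "(b,c) \<in> A" "b \<in> T" "c \<in> T" using step(2) by (auto simp: Rs_def)
  show ?case
  proof (cases "b \<in> Dm x")
    case True
    then have "(x,b) \<in> (Rs A (T \<inter> insert x (Dm x)))\<^sup>*" using step by blast
    then show ?thesis using bc True step(4) by (auto intro!: Rs_step[of x b])
  next
    case False
    then have avb: "av x b" using bc assms(2) by (auto simp: Dm_def)
    show ?thesis
    proof (cases "c = x")
      case True then show ?thesis by simp
    next
      case False
      have "b \<noteq> x" using avb self_Dm[OF assms(4)] \<open>b \<notin> Dm x\<close> by blast
      then have "av x c" using avb bc False assms(2)
        unfolding av_def by (auto intro!: Rs_step[of s b])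
      then show ?thesis using step(4) by (simp add: Dm_def)
    qed
  qed
qed

end


context G
begin

lemma diblock_sub: "diblock W A x \<subseteq> insert x W" by (auto simp: diblock_def)

lemma LB:
  assumes xV: "x \<in> V" and W: "W = insert x (Dm x)" and b: "b \<in> diblock W A x" "b \<noteq> x"
    and y: "y \<in> Dm x" "y \<noteq> x" "b \<noteq> y"
  shows "av y b"
proof -
  have sy: "s \<noteq> y" using s_Dm y by blast
  have sx: "(s,x) \<in> (Rs A (V-{y}))\<^sup>*"
    by (rule Rs_mono[OF _ prefix_rt[OF xV]]) (use y in auto)
  have WV: "W \<subseteq> V" using W xV Dm_V by auto
  have bW: "b \<in> W" using b by (auto simp: diblock_def)
  have "(x,b) \<in> (Rs A (V-{y}))\<^sup>*"
  proof -
    have "(x,b) \<in> A \<or> bireachable W A x b" using b by (auto simp: diblock_def)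
    then show ?thesis
    proof
      assume "(x,b) \<in> A"
      then have "(x,b) \<in> Rs A (V-{y})" using xV bW WV y by (auto simp: Rs_def)
      then show ?thesis by simp
    next
      assume "bireachable W A x b"
      then obtain p q where pq: "dipath W A p" "dipath W A q" "hd p = x" "last p = b"
        "hd q = x" "last q = b" "(set p - {x, b}) \<inter> (set q - {x, b}) = {}"
        unfolding bireachable_def by blast
      have "y \<notin> set p \<or> y \<notin> set q" using pq(7) y by blast
      then show ?thesis
      proof
        assume "y \<notin> set p"
        then have "set p \<subseteq> V - {y}" using pq(1) WV by (auto simp: dipath_def)
        from path_hd_last[OF pq(1) this] show ?thesis using pq by simp
      next
        assume "y \<notin> set q"
        then have "set q \<subseteq> V - {y}" using pq(2) WV by (auto simp: dipath_def)
        from path_hd_last[OF pq(2) this] show ?thesis using pq by simp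
      qed
    qed
  qed
  with sx have "(s,b) \<in> (Rs A (V-{y}))\<^sup>*" by (rule rtrancl_trans)
  then show ?thesis using sy by (simp add: av_def)
qed

lemma child:
  assumes xV: "x \<in> V" and W: "W = insert x (Dm x)" and yb: "y \<in> bottlenecks W A x"
  shows "y \<in> V \<and> Xset W A x y \<union> {y} = insert y (Dm y)"
proof -
  have WV: "W \<subseteq> V" using W xV Dm_V by auto
  have yB: "y \<in> diblock W A x" "y \<noteq> x" using yb by (auto simp: bottlenecks_def)
  have yW: "y \<in> W" using yB diblock_sub by blast
  then have yDx: "y \<in> Dm x" using yB W by auto
  have yV: "y \<in> V" using yW WV by auto
  have sy: "s \<noteq> y" using s_Dm yDx yB by blast
  have sxy: "(s,x) \<in> (Rs A (V-{y}))\<^sup>*"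
    by (rule Rs_mono[OF _ prefix_rt[OF xV]]) (use yDx yB in auto)
  have xB: "x \<in> diblock W A x" by (simp add: diblock_def)
  have b1: "v \<in> Dm y" if v: "v \<in> Xset W A x y" for v
  proof (rule ccontr)
    assume "v \<notin> Dm y"
    have vW: "v \<in> W" "v \<notin> diblock W A x" using v unfolding Xset_def by blast+
    then have vV: "v \<in> V" using WV by auto
    then have avv: "av y v" using \<open>v \<notin> Dm y\<close> by (simp add: Dm_def)
    then have p: "(s,v) \<in> (Rs A (V-{y}))\<^sup>*" by (simp add: av_def)
    have "v \<noteq> x" using vW xB by auto
    then have "v \<in> Dm x" using vW W by auto
    from suffix_rt[OF p _ this xV]
    have "(x,v) \<in> (Rs A ((V-{y}) \<inter> insert x (Dm x)))\<^sup>*" by auto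
    moreover have "x \<in> (V-{y}) \<inter> insert x (Dm x)" using xV yB by auto
    ultimately obtain q where q: "dipath ((V-{y}) \<inter> insert x (Dm x)) A q" "hd q = x" "last q = v"
      using rt_path[of x v A] by metis
    have qW: "dipath W A q" using q(1) W by (auto simp: dipath_def)
    have "\<forall>p. dipath W A p \<and> hd p = x \<and> last p = v \<longrightarrow>
      (\<exists>k < length p. p ! k = y \<and> (\<forall>j. k < j \<and> j < length p \<longrightarrow> p ! j \<notin> diblock W A x))"
      using v by (simp add: Xset_def)
    from this[rule_format, of q] obtain k where "k < length q" "q!k = y"
      using qW q by blast
    then have "y \<in> set q" by auto
    then show False using q(1) by (auto simp: dipath_def)
  qed
  have b2: "v \<in> Xset W A x y" if v: "v \<in> Dm y" "v \<noteq> y" for v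
  proof -
    have vV: "v \<in> V" using v Dm_V by auto
    have vDx: "v \<in> Dm x" using Dm_trans[OF yDx v(1)] .
    then have vW: "v \<in> W" using W by auto
    have vx: "v \<noteq> x"
    proof
      assume "v = x"
      then have "x \<in> Dm y" using v by simp
      then show False using Dm_antisym[OF xV yDx] yB by simp
    qed
    have vnB: "v \<notin> diblock W A x"
    proof
      assume "v \<in> diblock W A x"
      then have "av y v" using LB[OF xV W _ vx yDx yB(2) v(2)] by blast
      then show False using v by (simp add: Dm_def)
    qed
    have paths: "\<exists>k<length q. q ! k = y \<and> (\<forall>j. k < j \<and> j < length q \<longrightarrow> q ! j \<notin> diblock W A x)"
      if q: "dipath W A q" "hd q = x" "last q = v" for q
    proof -
      have ne: "q \<noteq> []" and dist: "distinct q" and sq: "set q \<subseteq> W" using q by (auto simp: dipath_def)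
      have yq: "y \<in> set q"
      proof (rule ccontr)
        assume "y \<notin> set q"
        then have "set q \<subseteq> V - {y}" using sq WV by auto
        from path_hd_last[OF q(1) this] have "(x,v) \<in> (Rs A (V-{y}))\<^sup>*" using q by simp
        with sxy have "(s,v) \<in> (Rs A (V-{y}))\<^sup>*" by (rule rtrancl_trans)
        then have "av y v" using sy by (simp add: av_def)
        then show False using v by (simp add: Dm_def)
      qed
      then obtain k where k: "k < length q" "q!k = y" by (auto simp: in_set_conv_nth)
      have "q!j \<notin> diblock W A x" if j: "k < j" "j < length q" for j
      proof
        assume jB: "q!j \<in> diblock W A x"
        have q0: "q!0 = x" using q ne by (simp add: hd_conv_nth)
        have "q!j \<noteq> q!0" using dist j ne nth_eq_iff_index_eq[OF dist, of j 0] by simp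
        then have jx: "q!j \<noteq> x" using q0 by simp
        have jy: "q!j \<noteq> y" using dist j k nth_eq_iff_index_eq[OF dist, of j k] by simp
        have "av y (q!j)" using LB[OF xV W jB jx yDx yB(2) jy] .
        then have s1: "(s, q!j) \<in> (Rs A (V-{y}))\<^sup>*" by (simp add: av_def)
        have "(q!j, q!(length q - 1)) \<in> (Rs A (V-{y}))\<^sup>*"
        proof (rule path_rt[OF q(1)])
          show "j \<le> length q - 1" "length q - 1 < length q" using j by auto
          show "\<forall>i. j \<le> i \<and> i \<le> length q - 1 \<longrightarrow> q ! i \<in> V - {y}"
          proof (intro allI impI)
            fix i assume i: "j \<le> i \<and> i \<le> length q - 1"
            then have il: "i < length q" using j by auto
            then have "q!i \<in> V" using sq WV by (meson nth_mem subsetD)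
            moreover have "q!i \<noteq> y" using dist il k i j nth_eq_iff_index_eq[OF dist, of i k] by simp
            ultimately show "q ! i \<in> V - {y}" by simp
          qed
        qed
        then have "(q!j, v) \<in> (Rs A (V-{y}))\<^sup>*" using q ne by (simp add: last_conv_nth)
        with s1 have "(s,v) \<in> (Rs A (V-{y}))\<^sup>*" by (rule rtrancl_trans)
        then have "av y v" using sy by (simp add: av_def)
        then show False using v by (simp add: Dm_def)
      qed
      then show ?thesis using k by blast
    qed
    have "\<forall>p. dipath W A p \<and> hd p = x \<and> last p = v \<longrightarrow>
      (\<exists>k < length p. p ! k = y \<and> (\<forall>j. k < j \<and> j < length p \<longrightarrow> p ! j \<notin> diblock W A x))"
      using paths by blast
    then show ?thesis unfolding Xset_def using vW vnB by blast
  qed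
  have "Xset W A x y \<union> {y} = insert y (Dm y)"
  proof
    show "Xset W A x y \<union> {y} \<subseteq> insert y (Dm y)" using b1 by auto
    show "insert y (Dm y) \<subseteq> Xset W A x y \<union> {y}" using b2 by auto
  qed
  then show ?thesis using yV by simp
qed

lemma nodes_inv: "(W,x) \<in> cd_nodes V A s \<Longrightarrow> x \<in> V \<and> W = insert x (Dm x)"
proof (induction rule: cd_nodes.induct)
  case cd_root
  then show ?case using sV Dm_s by auto
next
  case (cd_child W x y)
  then show ?case using child[of x W y] by auto
qed

end


context G
begin

lemma node_eq:
  assumes "cd_node V A s x"
  shows "x \<in> V \<and> cd_sub V A s x = insert x (Dm x) \<and> (insert x (Dm x), x) \<in> cd_nodes V A s"
proof -
  obtain W where W: "(W,x) \<in> cd_nodes V A s" using assms by (auto simp: cd_node_def)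
  have inv: "x \<in> V" "W = insert x (Dm x)" using nodes_inv[OF W] by auto
  have "cd_sub V A s x = insert x (Dm x)"
    unfolding cd_sub_def
  proof (rule the_equality)
    show "(insert x (Dm x), x) \<in> cd_nodes V A s" using W inv by simp
    fix W' assume "(W', x) \<in> cd_nodes V A s"
    then show "W' = insert x (Dm x)" using nodes_inv by blast
  qed
  then show ?thesis using W inv by simp
qed

lemma children_eq: "cd_node V A s x \<Longrightarrow> cd_children V A s x = bottlenecks (insert x (Dm x)) A x"
  using node_eq by (simp add: cd_children_def)

lemma bag_eq: "cd_node V A s x \<Longrightarrow> cd_bag V A s x = diblock (insert x (Dm x)) A x"
  using node_eq by (simp add: cd_bag_def)

lemma child_node:
  assumes "cd_node V A s x" "y \<in> cd_children V A s x"
  shows "cd_node V A s y \<and> y \<in> Dm x \<and> y \<noteq> x"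
proof -
  have n: "x \<in> V" "(insert x (Dm x), x) \<in> cd_nodes V A s" using node_eq[OF assms(1)] by auto
  have yb: "y \<in> bottlenecks (insert x (Dm x)) A x" using children_eq[OF assms(1)] assms(2) by simp
  have "(Xset (insert x (Dm x)) A x y \<union> {y}, y) \<in> cd_nodes V A s"
    by (rule cd_nodes.cd_child[OF n(2) yb])
  then have "cd_node V A s y" by (auto simp: cd_node_def)
  moreover have "y \<in> diblock (insert x (Dm x)) A x" "y \<noteq> x" using yb by (auto simp: bottlenecks_def)
  moreover then have "y \<in> Dm x" using diblock_sub by blast
  ultimately show ?thesis by blast
qed

lemma desc:
  assumes "(a,y) \<in> (cd_child_rel V A s)\<^sup>*" "cd_node V A s a"
  shows "cd_node V A s y \<and> insert y (Dm y) \<subseteq> insert a (Dm a)"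
  using assms(1)
proof (induction rule: rtrancl_induct)
  case base then show ?case using assms(2) by simp
next
  case (step b c)
  have "c \<in> cd_children V A s b" using step(2) by (simp add: cd_child_rel_def)
  then have c: "cd_node V A s c" "c \<in> Dm b" using child_node step(3) by blast+
  have "insert c (Dm c) \<subseteq> insert b (Dm b)" using c(2) Dm_trans by blast
  then show ?case using step(3) c by blast
qed

lemma deg:
  assumes "degenerate_node V A s x"
  shows "\<exists>c. cd_children V A s x = {c} \<and> cd_bag V A s x = {x,c} \<and> c \<noteq> x \<and> c \<in> Dm x \<and>
    (x,c) \<in> A \<and> (\<forall>z. (x,z) \<in> A \<and> z \<in> insert x (Dm x) \<longrightarrow> z = c) \<and> x \<in> V"
proof -
  have nd: "cd_node V A s x" and ch: "cd_children V A s x \<noteq> {}" and cd: "card (cd_bag V A s x) = 2"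
    using assms by (auto simp: degenerate_node_def)
  let ?W = "insert x (Dm x)"
  let ?B = "diblock ?W A x"
  have xV: "x \<in> V" using node_eq[OF nd] by simp
  have B: "cd_bag V A s x = ?B" using bag_eq[OF nd] .
  have C: "cd_children V A s x = bottlenecks ?W A x" using children_eq[OF nd] .
  obtain c where c: "c \<in> cd_children V A s x" using ch by blast
  have cB: "c \<in> ?B" "c \<noteq> x" using c C by (auto simp: bottlenecks_def)
  have xB: "x \<in> ?B" by (simp add: diblock_def)
  have fin: "finite ?B" using cd B by (metis card.infinite zero_neq_numeral)
  have Beq: "?B = {x,c}"
  proof -
    have sub: "{x,c} \<subseteq> ?B" using cB xB by simp
    have "card {x,c} = 2" using cB by simp
    then show ?thesis using card_subset_eq[OF fin sub] cd B by simp
  qed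
  have Ceq: "cd_children V A s x = {c}"
    using c C Beq by (auto simp: bottlenecks_def)
  have outn: "\<forall>z. (x,z) \<in> A \<and> z \<in> ?W \<longrightarrow> z = c"
  proof (intro allI impI)
    fix z assume "(x,z) \<in> A \<and> z \<in> ?W"
    then have "z \<in> ?B" "z \<noteq> x" using noloop by (auto simp: diblock_def)
    then show "z = c" using Beq by simp
  qed
  have cDm: "c \<in> Dm x" using cB diblock_sub by blast
  have xc: "(x,c) \<in> A"
  proof -
    have "(x,c) \<in> A \<or> bireachable ?W A x c" using cB by (auto simp: diblock_def)
    then show ?thesis
    proof
      assume "bireachable ?W A x c"
      then obtain p where p: "dipath ?W A p" "hd p = x" "last p = c"
        unfolding bireachable_def by blast
      have ne: "p \<noteq> []" using p by (simp add: dipath_def)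
      have "length p \<noteq> 1"
      proof
        assume "length p = 1"
        then have "hd p = last p" using ne by (simp add: hd_conv_nth last_conv_nth)
        then show False using p cB by simp
      qed
      then have l2: "Suc 0 < length p" using ne by (cases p) auto
      then have arc: "(p!0, p!1) \<in> A" using p(1) by (simp add: dipath_def)
      have "p!0 = x" using p ne by (simp add: hd_conv_nth)
      moreover have "p!1 \<in> ?W"
      proof -
        have "p!1 \<in> set p" using l2 by simp
        then show ?thesis using p(1) unfolding dipath_def by blast
      qed
      ultimately have "p!1 = c" using outn arc by auto
      then show ?thesis using arc \<open>p!0 = x\<close> by simp
    qed
  qed
  show ?thesis using Ceq B Beq cB cDm xc outn xV by blast
qed

lemma LF:
  assumes F: "out_branching V A s F" and v: "v \<in> V" "v \<noteq> s"
  shows "\<exists>u. (u,v) \<in> F \<and> u \<in> V \<and> (s,u) \<in> (Rs A (V-{v}))\<^sup>*"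
proof -
  have FA: "F \<subseteq> A" and sv: "(s,v) \<in> F\<^sup>*" using F v by (auto simp: out_branching_def)
  have "Rs F V = F" using FA AV by (auto simp: Rs_def)
  then have "(s,v) \<in> (Rs F V)\<^sup>*" using sv by simp
  then obtain p where p: "dipath V F p" "hd p = s" "last p = v" using rt_path sV by metis
  have ne: "p \<noteq> []" and dist: "distinct p" using p by (auto simp: dipath_def)
  have "length p \<noteq> 1"
  proof
    assume "length p = 1"
    then have "hd p = last p" using ne by (simp add: hd_conv_nth last_conv_nth)
    then show False using p v by simp
  qed
  then have l2: "Suc 0 < length p" using ne by (cases p) auto
  define u where "u = p!(length p - 2)"
  have "Suc (length p - 2) = length p - 1" using l2 by simp
  moreover have "Suc (length p - 2) < length p" using l2 by simp
  ultimately have "(p!(length p - 2), p!(length p - 1)) \<in> F" using p(1) unfolding dipath_def by metis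
  then have uv: "(u, v) \<in> F" using p ne unfolding u_def by (simp add: last_conv_nth)
  have "(p!0, p!(length p - 2)) \<in> (Rs F (V-{v}))\<^sup>*"
  proof (rule path_rt[OF p(1)])
    show "0 \<le> length p - 2" "length p - 2 < length p" using l2 by auto
    show "\<forall>k. 0 \<le> k \<and> k \<le> length p - 2 \<longrightarrow> p ! k \<in> V - {v}"
    proof (intro allI impI)
      fix k assume k: "0 \<le> k \<and> k \<le> length p - 2"
      then have kl: "k < length p" "k \<noteq> length p - 1" using l2 by auto
      then have "p!k \<noteq> p!(length p - 1)" using dist nth_eq_iff_index_eq[OF dist, of k "length p - 1"] ne by simp
      then have "p!k \<noteq> v" using p ne by (simp add: last_conv_nth)
      moreover have "p!k \<in> V" using p(1) kl by (auto simp: dipath_def)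
      ultimately show "p ! k \<in> V - {v}" by simp
    qed
  qed
  then have "(s,u) \<in> (Rs A (V-{v}))\<^sup>*" using p ne FA Rs_mono2 unfolding u_def
    by (metis hd_conv_nth)
  moreover have "u \<in> V" using uv FA AV by auto
  ultimately show ?thesis using uv by blast
qed

lemma LX:
  assumes d: "degenerate_node V A s x" and c: "cd_children V A s x = {c}"
    and u: "(u,c) \<in> A" "u \<in> V" "(s,u) \<in> (Rs A (V-{c}))\<^sup>*" "s \<noteq> c"
  shows "u = x"
proof (rule ccontr)
  assume ux: "u \<noteq> x"
  obtain c' where c': "cd_children V A s x = {c'}" "c' \<noteq> x" "c' \<in> Dm x" "x \<in> V"
    "\<forall>z. (x,z) \<in> A \<and> z \<in> insert x (Dm x) \<longrightarrow> z = c'"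
    using deg[OF d] by blast
  have cc: "c' = c" using c c'(1) by simp
  show False
  proof (cases "u \<in> Dm x")
    case True
    have "(x,u) \<in> (Rs A ((V-{c}) \<inter> insert x (Dm x)))\<^sup>*"
      by (rule suffix_rt[OF u(3) _ True c'(4)]) auto
    then show False
    proof (cases rule: converse_rtranclE)
      case base then show False using ux by simp
    next
      case (step w)
      then have "(x,w) \<in> A" "w \<in> insert x (Dm x)" "w \<noteq> c" by (auto simp: Rs_def)
      then show False using c'(5) cc by blast
    qed
  next
    case False
    then have "av x u" using u by (simp add: Dm_def)
    then have "s \<noteq> x" "(s,u) \<in> (Rs A (V-{x}))\<^sup>*" by (auto simp: av_def)
    moreover have "c \<in> V" using c'(3) cc Dm_V by auto
    ultimately have "(s,c) \<in> (Rs A (V-{x}))\<^sup>*" using u c'(2) cc ux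
      by (auto intro!: Rs_step[of s u])
    then have "av x c" using \<open>s \<noteq> x\<close> by (simp add: av_def)
    then show False using c'(3) cc by (simp add: Dm_def)
  qed
qed

end


theorem lemma14:
  fixes V :: "'a set" and A :: "('a \<times> 'a) set" and s :: 'a and xs :: "'a list"
  assumes "digraph V A" and "card V \<ge> 2" and "s \<in> V"
    and "\<forall>v \<in> V. (s, v) \<in> A\<^sup>*"
    and "degenerate_path V A s xs"
  shows "(\<forall>i. Suc i < length xs \<longrightarrow> (xs ! i, xs ! Suc i) \<in> A \<and>
             (\<forall>F. out_branching V A s F \<longrightarrow> (xs ! i, xs ! Suc i) \<in> F))
       \<and> (\<forall>i j. i < j \<and> j < length xs \<and> (xs ! j, xs ! i) \<in> A \<longrightarrow>
             (\<forall>F. out_branching V A s F \<longrightarrow> (xs ! j, xs ! i) \<notin> F))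
       \<and> (\<forall>i y z. Suc i < length xs \<and> (xs ! i, y) \<in> (cd_child_rel V A s)\<^sup>* \<and>
             z \<in> cd_bag V A s y \<and> (xs ! i, z) \<in> A \<longrightarrow> z = xs ! Suc i)"
proof -
  interpret G V A s by (rule G.intro) (use assms in auto)
  have dn: "\<And>i. i < length xs \<Longrightarrow> degenerate_node V A s (xs!i)"
    and dc: "\<And>i. Suc i < length xs \<Longrightarrow> xs ! Suc i \<in> cd_children V A s (xs ! i)"
    using assms(5) by (auto simp: degenerate_path_def)
  have xsV: "xs!i \<in> V" if "i < length xs" for i using deg[OF dn[OF that]] by blast
  have st: "cd_children V A s (xs!i) = {xs!Suc i} \<and> cd_bag V A s (xs!i) = {xs!i, xs!Suc i} \<and>
     xs!Suc i \<noteq> xs!i \<and> xs!Suc i \<in> Dm (xs!i) \<and> (xs!i, xs!Suc i) \<in> A"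
    if i: "Suc i < length xs" for i
  proof -
    obtain c where c: "cd_children V A s (xs!i) = {c}" "cd_bag V A s (xs!i) = {xs!i,c}" "c \<noteq> xs!i"
      "c \<in> Dm (xs!i)" "(xs!i,c) \<in> A"
      using deg[OF dn, of i] i by auto
    have "c = xs!Suc i" using dc[OF i] c(1) by simp
    then show ?thesis using c by simp
  qed
  have nots: "xs!Suc i \<noteq> s" if i: "Suc i < length xs" for i
  proof
    assume "xs!Suc i = s"
    then have "s \<in> Dm (xs!i)" using st[OF i] by simp
    then have "xs!i = s" using s_Dm by blast
    then show False using st[OF i] \<open>xs!Suc i = s\<close> by simp
  qed
  have P1: "\<forall>i. Suc i < length xs \<longrightarrow> (xs ! i, xs ! Suc i) \<in> A \<and>
             (\<forall>F. out_branching V A s F \<longrightarrow> (xs ! i, xs ! Suc i) \<in> F)"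
  proof (intro allI impI conjI)
    fix i assume i: "Suc i < length xs"
    show "(xs ! i, xs ! Suc i) \<in> A" using st[OF i] by simp
    fix F assume F: "out_branching V A s F"
    have cV: "xs!Suc i \<in> V" using xsV i by simp
    obtain u where u: "(u, xs!Suc i) \<in> F" "u \<in> V" "(s,u) \<in> (Rs A (V-{xs!Suc i}))\<^sup>*"
      using LF[OF F cV nots[OF i]] by blast
    have "(u, xs!Suc i) \<in> A" using u F by (auto simp: out_branching_def)
    moreover have "degenerate_node V A s (xs!i)" using dn[of i] i by simp
    moreover have "xs ! Suc i \<noteq> s" using nots[OF i] .
    ultimately have "u = xs!i"
      using LX[of "xs!i" "xs!Suc i" u] st[OF i] u by auto
    then show "(xs ! i, xs ! Suc i) \<in> F" using u by simp
  qed
  have chain: "\<forall>d. i + Suc d < length xs \<longrightarrow> xs!(i + Suc d) \<in> Dm (xs!i) \<and> xs!(i + Suc d) \<noteq> xs!i"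
    for i
  proof
    fix d show "i + Suc d < length xs \<longrightarrow> xs!(i + Suc d) \<in> Dm (xs!i) \<and> xs!(i + Suc d) \<noteq> xs!i"
    proof (induction d)
      case 0 then show ?case using st[of i] by simp
    next
      case (Suc d)
      show ?case
      proof
        assume l: "i + Suc (Suc d) < length xs"
        then have ih: "xs!(i + Suc d) \<in> Dm (xs!i)" "xs!(i + Suc d) \<noteq> xs!i" using Suc by auto
        have s2: "xs!(i + Suc (Suc d)) \<in> Dm (xs!(i + Suc d))"
          using st[of "i + Suc d"] l by simp
        have m1: "xs!(i + Suc (Suc d)) \<in> Dm (xs!i)" using Dm_trans[OF ih(1) s2] .
        have "xs!(i + Suc (Suc d)) \<noteq> xs!i"
        proof
          assume e: "xs!(i + Suc (Suc d)) = xs!i"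
          have "xs!i \<in> Dm (xs!(i + Suc d))" using s2 e by simp
          then show False using Dm_antisym[OF xsV ih(1)] ih(2) l by simp
        qed
        then show "xs!(i + Suc (Suc d)) \<in> Dm (xs!i) \<and> xs!(i + Suc (Suc d)) \<noteq> xs!i" using m1 by simp
      qed
    qed
  qed
  have P2: "\<forall>i j. i < j \<and> j < length xs \<and> (xs ! j, xs ! i) \<in> A \<longrightarrow>
             (\<forall>F. out_branching V A s F \<longrightarrow> (xs ! j, xs ! i) \<notin> F)"
  proof (intro allI impI notI)
    fix i j F assume ij: "i < j \<and> j < length xs \<and> (xs ! j, xs ! i) \<in> A"
      and F: "out_branching V A s F" and jiF: "(xs ! j, xs ! i) \<in> F"
    have jeq: "j = i + Suc (j - i - 1)" using ij by simp
    have ch: "xs!j \<in> Dm (xs!i)" "xs!j \<noteq> xs!i" using chain[of i, rule_format, of "j - i - 1"] ij jeq by auto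
    have iV: "xs!i \<in> V" "xs!j \<in> V" using xsV ij by auto
    show False
    proof (cases "xs!i = s")
      case True then show False using F jiF by (auto simp: out_branching_def)
    next
      case False
      obtain u where u: "(u, xs!i) \<in> F" "u \<in> V" "(s,u) \<in> (Rs A (V-{xs!i}))\<^sup>*"
        using LF[OF F iV(1) False] by blast
      have "\<exists>!u. (u, xs!i) \<in> F" using F iV False by (auto simp: out_branching_def)
      then have "u = xs!j" using u(1) jiF by blast
      then have "av (xs!i) (xs!j)" using u False by (simp add: av_def)
      then show False using ch by (simp add: Dm_def)
    qed
  qed
  have P3: "\<forall>i y z. Suc i < length xs \<and> (xs ! i, y) \<in> (cd_child_rel V A s)\<^sup>* \<and>
             z \<in> cd_bag V A s y \<and> (xs ! i, z) \<in> A \<longrightarrow> z = xs ! Suc i"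
  proof (intro allI impI)
    fix i y z assume h: "Suc i < length xs \<and> (xs ! i, y) \<in> (cd_child_rel V A s)\<^sup>* \<and>
             z \<in> cd_bag V A s y \<and> (xs ! i, z) \<in> A"
    let ?x = "xs!i" and ?c = "xs!Suc i"
    have i: "Suc i < length xs" and r: "(?x, y) \<in> (cd_child_rel V A s)\<^sup>*"
      and zb: "z \<in> cd_bag V A s y" and xz: "(?x, z) \<in> A" using h by auto
    have S: "cd_children V A s ?x = {?c}" "cd_bag V A s ?x = {?x, ?c}" "?c \<noteq> ?x"
      "?c \<in> Dm ?x" using st[OF i] by auto
    have xnode: "cd_node V A s ?x" using dn[of i] i by (simp add: degenerate_node_def)
    from r show "z = ?c"
    proof (cases rule: converse_rtranclE)
      case base
      then show ?thesis using zb S(2) xz noloop by auto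
    next
      case (step y')
      then have "y' \<in> cd_children V A s ?x" by (simp add: cd_child_rel_def)
      then have y'c: "y' = ?c" using S(1) by simp
      have cnode: "cd_node V A s ?c" using child_node[OF xnode] S(1) by blast
      have d: "cd_node V A s y" "insert y (Dm y) \<subseteq> insert ?c (Dm ?c)"
        using desc[OF _ cnode] step(2) y'c by auto
      have "z \<in> insert y (Dm y)" using zb bag_eq[OF d(1)] diblock_sub by blast
      then have zc: "z \<in> insert ?c (Dm ?c)" using d(2) by blast
      show ?thesis
      proof (rule ccontr)
        assume zn: "z \<noteq> ?c"
        then have zD: "z \<in> Dm ?c" using zc by simp
        have xV: "?x \<in> V" using xsV i by simp
        have sc: "s \<noteq> ?c" using nots[OF i] by simp
        have "(s, ?x) \<in> (Rs A (V-{?c}))\<^sup>*"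
          by (rule Rs_mono[OF _ prefix_rt[OF xV]]) (use S in auto)
        moreover have "z \<in> V" using zD Dm_V by auto
        ultimately have "(s, z) \<in> (Rs A (V-{?c}))\<^sup>*" using xz zn S(3) xV
          by (auto intro!: Rs_step[of s ?x])
        then have "av ?c z" using sc by (simp add: av_def)
        then show False using zD by (simp add: Dm_def)
      qed
    qed
  qed
  show ?thesis using P1 P2 P3 by blast
qed


end
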